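(* Let $X$ be a topological space and $q,k\ge1$ integers. If $X$ has finitely many connected components and all of them are contractible, then $X^q_k$ also has finitely many connected components and all of them are contractible.
   Context: $X^q_k=\{(x_1,\dots,x_q)\in X^q:|\{x_1,\dots,x_q\}|\le k\}$, with the subspace topology of the product $X^q$. *)

theory Defs
  imports "HOL-Analysis.Analysis"
begin

definition power_space :: "'a topology \<Rightarrow> nat \<Rightarrow> (nat \<Rightarrow> 'a) topology" where
  "power_space X q = product_topology (\<lambda>_. X) {..<q}"

definition bounded_config_space :: "'a topology \<Rightarrow> nat \<Rightarrow> nat \<Rightarrow> (nat \<Rightarrow> 'a) topology" where
  "bounded_config_space X q k =
     subtopology (power_space X q) {x \<in> topspace (power_space X q). card (x ` {..<q}) \<le> k}"

end

theory Submission
  imports Defs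
begin

lemma comp_eq_aux:
  assumes "C \<in> connected_components_of X" "z \<in> C"
  shows "connected_component_of_set X z = C"
  by (metis assms(1,2) connected_component_in_connected_components_of
    connected_component_of_def connected_component_of_refl
    connected_components_of_disjoint connectedin_connected_components_of
    disjnt_iff mem_Collect_eq)

lemma clopen_sub_aux:
  assumes "connectedin X S" "openin X T" "closedin X T" "S \<inter> T \<noteq> {}"
  shows "S \<subseteq> T"
  by (metis assms(1,2,3,4) connectedin_clopen_cases disjnt_def)

theorem lemma5p12:
  fixes X :: "'a topology" and q k :: nat
  assumes "q \<ge> 1" and "k \<ge> 1"
    and "finite (connected_components_of X)"
    and "\<forall>C \<in> connected_components_of X. contractible_space (subtopology X C)"
  shows "finite (connected_components_of (bounded_config_space X q k)) \<and>
         (\<forall>C \<in> connected_components_of (bounded_config_space X q k).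
            contractible_space (subtopology (bounded_config_space X q k) C))"
proof -
  define PS where "PS = power_space X q"
  define S where "S = {x \<in> topspace PS. card (x ` {..<q}) \<le> k}"
  define Y where "Y = bounded_config_space X q k"
  define comp where "comp z = connected_component_of_set X z" for z
  define CC where "CC = connected_components_of X"
  have Yeq: "Y = subtopology PS S"
    by (simp add: Y_def bounded_config_space_def PS_def S_def)
  have topPS: "topspace PS = PiE {..<q} (\<lambda>_. topspace X)"
    by (simp add: PS_def power_space_def)
  have topY: "topspace Y = S"
    by (auto simp: Yeq S_def)
  have CCopen: "openin X C" if "C \<in> CC" for C
    using open_in_finite_connected_components assms(3) that CC_def by blast
  have CCclosed: "closedin X C" if "C \<in> CC" for C
    using closedin_connected_components_of that CC_def by blast
  have compin: "comp z \<in> CC" if "z \<in> topspace X" for z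
    using that by (simp add: comp_def CC_def connected_component_in_connected_components_of)
  have compmem: "z \<in> comp z" if "z \<in> topspace X" for z
    using that by (simp add: comp_def connected_component_of_refl)
  have compeq: "comp z = C" if "C \<in> CC" "z \<in> C" for C z
    using that comp_eq_aux by (simp add: comp_def CC_def)
  have CCsub: "C \<subseteq> topspace X" if "C \<in> CC" for C
    using that by (simp add: CC_def connected_components_of_subset)
  have "\<forall>C\<in>CC. \<exists>a h. a \<in> C \<and> continuous_map (prod_topology (top_of_set {0..1::real}) (subtopology X C)) (subtopology X C) h
          \<and> (\<forall>z. h (0,z) = z) \<and> (\<forall>z. h (1,z) = a)"
  proof
    fix C assume C: "C \<in> CC"
    then have "contractible_space (subtopology X C)" using assms(4) CC_def by auto
    moreover have "subtopology X C \<noteq> trivial_topology"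
      using C CCsub nonempty_connected_components_of[of C X] CC_def
      by (metis inf.absorb_iff2 null_topspace_iff_trivial topspace_subtopology)
    ultimately obtain a where a1: "a \<in> topspace (subtopology X C)" and
       a2: "homotopic_with (\<lambda>x. True) (subtopology X C) (subtopology X C) id (\<lambda>x. a)"
      by (auto simp: contractible_space)
    from a2 have "\<exists>hh. continuous_map (prod_topology (top_of_set {0..1::real}) (subtopology X C)) (subtopology X C) hh \<and>
       (\<forall>z. hh (0,z) = z) \<and> (\<forall>z. hh (1,z) = a)"
      by (simp add: homotopic_with_def)
    then obtain hh where hh: "continuous_map (prod_topology (top_of_set {0..1::real}) (subtopology X C)) (subtopology X C) hh"
       "\<forall>z. hh (0,z) = z" "\<forall>z. hh (1,z) = a"
      by blast
    show "\<exists>a h. a \<in> C \<and> continuous_map (prod_topology (top_of_set {0..1::real}) (subtopology X C)) (subtopology X C) h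
          \<and> (\<forall>z. h (0,z) = z) \<and> (\<forall>z. h (1,z) = a)"
      using a1 hh by (intro exI[of _ a] exI[of _ hh]) auto
  qed
  then have "\<exists>a. \<forall>C\<in>CC. \<exists>h. a C \<in> C \<and> continuous_map (prod_topology (top_of_set {0..1::real}) (subtopology X C)) (subtopology X C) h
          \<and> (\<forall>z. h (0,z) = z) \<and> (\<forall>z. h (1,z) = a C)"
    by (rule bchoice)
  then obtain a where "\<forall>C\<in>CC. \<exists>h. a C \<in> C \<and> continuous_map (prod_topology (top_of_set {0..1::real}) (subtopology X C)) (subtopology X C) h
          \<and> (\<forall>z. h (0,z) = z) \<and> (\<forall>z. h (1,z) = a C)"
    by blast
  then have "\<exists>h. \<forall>C\<in>CC. a C \<in> C \<and> continuous_map (prod_topology (top_of_set {0..1::real}) (subtopology X C)) (subtopology X C) (h C)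
          \<and> (\<forall>z. h C (0,z) = z) \<and> (\<forall>z. h C (1,z) = a C)"
    by (rule bchoice)
  then obtain h where ah0: "\<forall>C\<in>CC. a C \<in> C \<and> continuous_map (prod_topology (top_of_set {0..1::real}) (subtopology X C)) (subtopology X C) (h C)
          \<and> (\<forall>z. h C (0,z) = z) \<and> (\<forall>z. h C (1,z) = a C)"
    by blast
  have ah: "a C \<in> C \<and> continuous_map (prod_topology (top_of_set {0..1::real}) (subtopology X C)) (subtopology X C) (h C)
          \<and> (\<forall>z. h C (0,z) = z) \<and> (\<forall>z. h C (1,z) = a C)" if "C \<in> CC" for C
    using ah0 that by blast
  define P where "P x = {y \<in> topspace Y. \<forall>i<q. comp (y i) = comp (x i)}" for x
  have Psub: "P x \<subseteq> topspace Y" for x by (auto simp: P_def)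
  have xcoord: "y i \<in> topspace X" if "y \<in> topspace Y" "i < q" for y i
    using that by (auto simp: topY S_def topPS PiE_iff)
  have contr: "contractible_space (subtopology Y (P x))" if x: "x \<in> topspace Y" for x
  proof -
    define \<sigma> where "\<sigma> i = comp (x i)" for i
    have \<sigma>CC: "\<sigma> i \<in> CC" if "i < q" for i
      using xcoord[OF x that] compin by (simp add: \<sigma>_def)
    define H where "H = (\<lambda>(t::real, y). restrict (\<lambda>i. h (comp (y i)) (t, y i)) {..<q})"
    define e where "e = restrict (\<lambda>i. a (\<sigma> i)) {..<q}"
    have Zeq: "subtopology Y (P x) = subtopology PS (P x)"
      using Psub[of x] by (simp add: Yeq subtopology_subtopology topY Int_absorb1)
    have topZ: "topspace (subtopology PS (P x)) = P x"
      using Psub[of x] by (auto simp: Yeq topY S_def)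
    have memP: "y i \<in> \<sigma> i" if "y \<in> P x" "i < q" for y i
    proof -
      have "y \<in> topspace Y" "comp (y i) = \<sigma> i" using that by (auto simp: P_def \<sigma>_def)
      then show ?thesis using xcoord[of y i] compmem[of "y i"] that by auto
    qed
    have Hval: "H (t,y) i = h (\<sigma> i) (t, y i)" if "y \<in> P x" "i < q" for t y i
      using that by (auto simp: H_def P_def \<sigma>_def)
    have Hin: "H (t,y) i \<in> \<sigma> i" if "t \<in> {0..1}" "y \<in> P x" "i < q" for t y i
    proof -
      have "(t, y i) \<in> topspace (prod_topology (top_of_set {0..1::real}) (subtopology X (\<sigma> i)))"
        using that memP CCsub \<sigma>CC by auto
      moreover have cm: "continuous_map (prod_topology (top_of_set {0..1::real}) (subtopology X (\<sigma> i))) (subtopology X (\<sigma> i)) (h (\<sigma> i))"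
        using ah[OF \<sigma>CC[OF \<open>i<q\<close>]] by blast
      ultimately have "h (\<sigma> i) (t, y i) \<in> topspace (subtopology X (\<sigma> i))"
        using continuous_map_image_subset_topspace[OF cm] by blast
      then show ?thesis using Hval that by auto
    qed
    have cH: "continuous_map (prod_topology (top_of_set {0..1::real}) (subtopology PS (P x))) PS H"
      unfolding PS_def power_space_def continuous_map_componentwise
    proof (intro conjI ballI)
      show "H ` topspace (prod_topology (top_of_set {0..1::real}) (subtopology (product_topology (\<lambda>_. X) {..<q}) (P x))) \<subseteq> extensional {..<q}"
        by (auto simp: H_def)
      fix i assume i: "i \<in> {..<q}"
      have c1: "continuous_map (prod_topology (top_of_set {0..1::real}) (subtopology (product_topology (\<lambda>_. X) {..<q}) (P x)))
                 (prod_topology (top_of_set {0..1::real}) (subtopology X (\<sigma> i))) (\<lambda>(t,y). (id t, y i))"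
        unfolding continuous_map_prod_top
      proof (rule disjI2, intro conjI)
        show "continuous_map (top_of_set {0..1::real}) (top_of_set {0..1::real}) id" by simp
        show "continuous_map (subtopology (product_topology (\<lambda>_. X) {..<q}) (P x)) (subtopology X (\<sigma> i)) (\<lambda>y. y i)"
          unfolding continuous_map_in_subtopology
        proof
          show "continuous_map (subtopology (product_topology (\<lambda>_. X) {..<q}) (P x)) X (\<lambda>y. y i)"
            using i by (intro continuous_map_from_subtopology continuous_map_product_projection) auto
          show "(\<lambda>y. y i) \<in> topspace (subtopology (product_topology (\<lambda>_. X) {..<q}) (P x)) \<rightarrow> \<sigma> i"
            using memP i by auto
        qed
      qed
      have c2: "continuous_map (prod_topology (top_of_set {0..1::real}) (subtopology (product_topology (\<lambda>_. X) {..<q}) (P x)))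
                 X (h (\<sigma> i) \<circ> (\<lambda>(t,y). (id t, y i)))"
        using continuous_map_compose[OF c1 conjunct1[OF conjunct2[OF ah[OF \<sigma>CC]]]] i
        by (auto intro: continuous_map_into_fulltopology)
      show "continuous_map (prod_topology (top_of_set {0..1::real}) (subtopology (product_topology (\<lambda>_. X) {..<q}) (P x))) X (\<lambda>p. H p i)"
      proof (rule continuous_map_eq[OF c2])
        fix p assume "p \<in> topspace (prod_topology (top_of_set {0..1::real}) (subtopology (product_topology (\<lambda>_. X) {..<q}) (P x)))"
        then obtain t y where "p = (t,y)" "y \<in> P x"
          using topZ by (auto simp: PS_def power_space_def)
        then show "(h (\<sigma> i) \<circ> (\<lambda>(t,y). (id t, y i))) p = H p i"
          using Hval i by auto
      qed
    qed
    have HP: "H (t,y) \<in> P x" if "t \<in> {0..1}" "y \<in> P x" for t y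
    proof -
      have yS: "y \<in> S" using that Psub topY by auto
      have "H (t,y) \<in> topspace PS"
        using Hin[OF that] CCsub \<sigma>CC by (auto simp: topPS H_def PiE_iff)
      moreover have "H (t,y) ` {..<q} = (\<lambda>z. h (comp z) (t,z)) ` (y ` {..<q})"
        by (auto simp: H_def)
      then have "card (H (t,y) ` {..<q}) \<le> card (y ` {..<q})"
        by (simp add: card_image_le)
      then have "card (H (t,y) ` {..<q}) \<le> k" using yS by (auto simp: S_def)
      moreover have "comp (H (t,y) i) = comp (x i)" if "i<q" for i
        using Hin[OF \<open>t \<in> {0..1}\<close> \<open>y \<in> P x\<close> that] compeq \<sigma>CC that by (simp add: \<sigma>_def)
      ultimately show ?thesis by (auto simp: P_def topY S_def)
    qed
    have "homotopic_with (\<lambda>x. True) (subtopology PS (P x)) (subtopology PS (P x)) id (\<lambda>_. e)"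
    proof (subst homotopic_with, simp, intro exI conjI ballI)
      show "continuous_map (prod_topology (top_of_set {0..1::real}) (subtopology PS (P x))) (subtopology PS (P x)) H"
        unfolding continuous_map_in_subtopology
        using cH HP topZ by auto
      fix y assume y: "y \<in> topspace (subtopology PS (P x))"
      then have yP: "y \<in> P x" using topZ by simp
      then have yE: "y \<in> extensional {..<q}" using Psub topY by (auto simp: S_def topPS PiE_def)
      show "H (0, y) = id y"
      proof (rule ext)
        fix i show "H (0,y) i = id y i"
        proof (cases "i<q")
          case True then show ?thesis using Hval[OF yP True] ah[OF \<sigma>CC[OF True]] by simp
        next
          case False then show ?thesis using yE by (simp add: H_def extensional_def)
        qed
      qed
      show "H (1, y) = e"
      proof (rule ext)
        fix i show "H (1,y) i = e i"
        proof (cases "i<q")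
          case True then show ?thesis using Hval[OF yP True] ah[OF \<sigma>CC[OF True]] by (simp add: e_def)
        next
          case False then show ?thesis by (simp add: H_def e_def)
        qed
      qed
    qed simp
    then show ?thesis
      unfolding Zeq contractible_space_def by blast
  qed
  have conP: "connectedin Y (P x)" if "x \<in> topspace Y" for x
    using contr[OF that] Psub[of x] contractible_imp_connected_space
    by (simp add: connectedin_def)
  have projY: "continuous_map Y X (\<lambda>y. y i)" if "i < q" for i
    unfolding Yeq PS_def power_space_def
    using that by (intro continuous_map_from_subtopology continuous_map_product_projection) auto
  have Pint: "P x = \<Inter> ((\<lambda>i. {y \<in> topspace Y. y i \<in> comp (x i)}) ` {..<q})" if "x \<in> topspace Y" for x
  proof (intro equalityI subsetI)
    fix y assume "y \<in> P x"
    then show "y \<in> \<Inter> ((\<lambda>i. {y \<in> topspace Y. y i \<in> comp (x i)}) ` {..<q})"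
      using xcoord compmem by (auto simp: P_def) (metis)
  next
    fix y assume y: "y \<in> \<Inter> ((\<lambda>i. {y \<in> topspace Y. y i \<in> comp (x i)}) ` {..<q})"
    have "0 \<in> {..<q}" using assms(1) by auto
    then have yY: "y \<in> topspace Y" using y by blast
    have "comp (y i) = comp (x i)" if "i < q" for i
      using y that compeq[OF compin[OF xcoord[OF \<open>x \<in> topspace Y\<close> that]]] by auto
    then show "y \<in> P x" using yY by (auto simp: P_def)
  qed
  have Popen: "openin Y (P x)" if "x \<in> topspace Y" for x
    unfolding Pint[OF that]
  proof (rule openin_Inter)
    show "finite ((\<lambda>i. {y \<in> topspace Y. y i \<in> comp (x i)}) ` {..<q})" by simp
    show "(\<lambda>i. {y \<in> topspace Y. y i \<in> comp (x i)}) ` {..<q} \<noteq> {}" using assms(1) by (auto simp: lessThan_empty_iff)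
    fix U assume "U \<in> (\<lambda>i. {y \<in> topspace Y. y i \<in> comp (x i)}) ` {..<q}"
    then obtain i where i: "i < q" "U = {y \<in> topspace Y. y i \<in> comp (x i)}" by auto
    show "openin Y U" unfolding i(2)
      using openin_continuous_map_preimage[OF projY[OF i(1)] CCopen[OF compin[OF xcoord[OF that i(1)]]]] .
  qed
  have Pclosed: "closedin Y (P x)" if "x \<in> topspace Y" for x
    unfolding Pint[OF that]
  proof (rule closedin_Inter)
    show "(\<lambda>i. {y \<in> topspace Y. y i \<in> comp (x i)}) ` {..<q} \<noteq> {}" using assms(1) by (auto simp: lessThan_empty_iff)
    fix U assume "U \<in> (\<lambda>i. {y \<in> topspace Y. y i \<in> comp (x i)}) ` {..<q}"
    then obtain i where i: "i < q" "U = {y \<in> topspace Y. y i \<in> comp (x i)}" by auto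
    show "closedin Y U" unfolding i(2)
      using closedin_continuous_map_preimage[OF projY[OF i(1)] CCclosed[OF compin[OF xcoord[OF that i(1)]]]] .
  qed
  have xP: "x \<in> P x" if "x \<in> topspace Y" for x
    using that by (simp add: P_def)
  have compY: "connected_component_of_set Y x = P x" if x: "x \<in> topspace Y" for x
  proof
    show "connected_component_of_set Y x \<subseteq> P x"
      using clopen_sub_aux[OF connectedin_connected_component_of Popen[OF x] Pclosed[OF x]]
        xP[OF x] x connected_component_of_refl[of Y x] by blast
    show "P x \<subseteq> connected_component_of_set Y x"
      using connected_component_of_maximal[OF conP[OF x] xP[OF x]] .
  qed
  have compsY: "connected_components_of Y = P ` topspace Y"
    unfolding connected_components_of_def using compY by auto
  have fin: "finite (P ` topspace Y)"
  proof (rule finite_subset)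
    show "P ` topspace Y \<subseteq> (\<lambda>\<sigma>. {y \<in> topspace Y. \<forall>i<q. comp (y i) = \<sigma> i}) ` PiE {..<q} (\<lambda>_. CC)"
    proof
      fix U assume "U \<in> P ` topspace Y"
      then obtain x where x: "x \<in> topspace Y" "U = P x" by auto
      have "restrict (\<lambda>i. comp (x i)) {..<q} \<in> PiE {..<q} (\<lambda>_. CC)"
        using compin xcoord[OF x(1)] by auto
      moreover have "U = {y \<in> topspace Y. \<forall>i<q. comp (y i) = restrict (\<lambda>i. comp (x i)) {..<q} i}"
        using x by (auto simp: P_def)
      ultimately show "U \<in> (\<lambda>\<sigma>. {y \<in> topspace Y. \<forall>i<q. comp (y i) = \<sigma> i}) ` PiE {..<q} (\<lambda>_. CC)"
        by blast
    qed
    show "finite ((\<lambda>\<sigma>. {y \<in> topspace Y. \<forall>i<q. comp (y i) = \<sigma> i}) ` PiE {..<q} (\<lambda>_. CC))"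
      using assms(3) by (simp add: CC_def finite_PiE)
  qed
  show ?thesis
    unfolding Y_def[symmetric] compsY using fin contr by auto
qed

end
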